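(* Let $\pi$ be a policy, $p$ a prior, and $f$ a utility function. For any integer $i$ with $1\le i\le c_{\mathrm{avg}}(\pi,p)$, define $\Delta_i:=f_{\mathrm{avg}}(\pi_i,p)-f_{\mathrm{avg}}(\pi_{i-1},p)$. Then $\Delta_i\ge\Delta^l_{\pi,i}$.
   Context: Finite ground set $V$, finite state set $Y$; a realization $\phi:V\to Y$ is drawn from prior $p$; $f:2^V\times\Phi_V\to\mathbb{R}$. A partial realization $\psi$ maps $\mathrm{dom}(\psi)\subseteq V$ to $Y$; $\phi\sim\psi$ means agreement on $\mathrm{dom}(\psi)$. A (possibly randomized) policy maps the observed partial realization to the next element to select or $\bot$ (terminate); $\psi_t$ denotes observations after $t$ selections; $E(\pi,\phi)$ is the set of selected elements; $f_{\mathrm{avg}}(\pi,p)=\mathbb{E}[f(E(\pi,\phi),\phi)]$, $c_{\mathrm{avg}}(\pi,p)=\mathbb{E}[|E(\pi,\phi)|]$. $\Delta^f_p(v\mid\psi)=\mathbb{E}[f(\{v\}\cup\mathrm{dom}(\psi),\phi)-f(\mathrm{dom}(\psi),\phi)\mid\phi\sim\psi]$. A sub-policy of $\pi$ runs like $\pi$ but may terminate earlier. For $\tau\ge0,\rho\in[0,1]$, $\pi^{\tau,\rho}$ is the sub-policy of $\pi$ that with probability $\rho$ terminates as soon as every remaining element has expected marginal gain strictly smaller than $\tau$, otherwise terminates as soon as every remaining element has expected marginal gain at most $\tau$. For each integer $i\le c_{\mathrm{avg}}(\pi,p)$ the sub-policy of this form with average cost $i$ exists and is unique; denote it $\pi_i$;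 $\pi_0$ terminates before selecting any element. $\Delta^l_{\pi,i}$ is the largest real $u$ such that almost surely, for all $t$ until $\pi_i$ terminates, $\Delta^f_p(\pi_i(\psi_t)\mid\psi_t)\ge u$. *)

theory Defs
  imports "HOL-Probability.Probability"
begin

text \<open>Ground set V = UNIV :: 'v (finite type), states Y = UNIV :: 'y (finite type).
  A realization is phi :: 'v \<Rightarrow> 'y, a partial realization is psi :: 'v \<rightharpoonup> 'y.
  A (possibly randomized) policy maps the observed partial realization to a distribution
  over the next element to select (Some v) or termination (None).\<close>

type_synonym ('v, 'y) policy = "('v \<rightharpoonup> 'y) \<Rightarrow> 'v option pmf"

definition valid_policy :: "('v, 'y) policy \<Rightarrow> bool" where
  "valid_policy \<pi> \<longleftrightarrow> (\<forall>\<psi> v. Some v \<in> set_pmf (\<pi> \<psi>) \<longrightarrow> v \<notin> dom \<psi>)"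

definition consistent :: "('v \<Rightarrow> 'y) \<Rightarrow> ('v \<rightharpoonup> 'y) \<Rightarrow> bool" where
  "consistent \<phi> \<psi> \<longleftrightarrow> (\<forall>v\<in>dom \<psi>. \<psi> v = Some (\<phi> v))"

definition gain :: "('v \<Rightarrow> 'y) pmf \<Rightarrow> ('v set \<Rightarrow> ('v \<Rightarrow> 'y) \<Rightarrow> real) \<Rightarrow> 'v \<Rightarrow> ('v \<rightharpoonup> 'y) \<Rightarrow> real" where
  "gain p f v \<psi> = measure_pmf.expectation (cond_pmf p {\<phi>. consistent \<phi> \<psi>})
      (\<lambda>\<phi>. f (insert v (dom \<psi>)) \<phi> - f (dom \<psi>) \<phi>)"

text \<open>Execution of policy pi on realization phi, additionally terminating as soon as the
  stopping rule S holds (checked before every selection). The result is the final partial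
  realization together with the trace of pairs (psi_t, v_t) of the observations before the
  t-th selection and the element selected there.\<close>
primrec run :: "('v, 'y) policy \<Rightarrow> (('v \<rightharpoonup> 'y) \<Rightarrow> bool) \<Rightarrow> ('v \<Rightarrow> 'y) \<Rightarrow> nat \<Rightarrow> ('v \<rightharpoonup> 'y)
    \<Rightarrow> (('v \<rightharpoonup> 'y) \<times> (('v \<rightharpoonup> 'y) \<times> 'v) list) pmf" where
  "run \<pi> S \<phi> 0 \<psi> = return_pmf (\<psi>, [])"
| "run \<pi> S \<phi> (Suc n) \<psi> =
     (if S \<psi> then return_pmf (\<psi>, [])
      else bind_pmf (\<pi> \<psi>) (\<lambda>a. case a of
              None \<Rightarrow> return_pmf (\<psi>, [])
            | Some v \<Rightarrow> map_pmf (\<lambda>(\<psi>', tr). (\<psi>', (\<psi>, v) # tr)) (run \<pi> S \<phi> n (\<psi>(v \<mapsto> \<phi> v)))))"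

text \<open>Joint distribution of (realization, final partial realization, trace); a valid policy
  makes at most CARD('v) selections, so this fuel is never binding.\<close>
definition exec :: "('v::finite, 'y) policy \<Rightarrow> (('v \<rightharpoonup> 'y) \<Rightarrow> bool) \<Rightarrow> ('v \<Rightarrow> 'y) pmf
    \<Rightarrow> (('v \<Rightarrow> 'y) \<times> ('v \<rightharpoonup> 'y) \<times> (('v \<rightharpoonup> 'y) \<times> 'v) list) pmf" where
  "exec \<pi> S p = bind_pmf p (\<lambda>\<phi>. map_pmf (\<lambda>r. (\<phi>, r)) (run \<pi> S \<phi> CARD('v) Map.empty))"

definition sub_exec :: "('v::finite, 'y) policy \<Rightarrow> ('v \<Rightarrow> 'y) pmf \<Rightarrow> ('v set \<Rightarrow> ('v \<Rightarrow> 'y) \<Rightarrow> real)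
    \<Rightarrow> real \<Rightarrow> real \<Rightarrow> (('v \<Rightarrow> 'y) \<times> ('v \<rightharpoonup> 'y) \<times> (('v \<rightharpoonup> 'y) \<times> 'v) list) pmf" where
  "sub_exec \<pi> p f \<tau> \<rho> = bind_pmf (bernoulli_pmf \<rho>) (\<lambda>b.
      if b then exec \<pi> (\<lambda>\<psi>. \<forall>v. v \<notin> dom \<psi> \<longrightarrow> gain p f v \<psi> < \<tau>) p
      else exec \<pi> (\<lambda>\<psi>. \<forall>v. v \<notin> dom \<psi> \<longrightarrow> gain p f v \<psi> \<le> \<tau>) p)"

definition f_avg_of :: "('v set \<Rightarrow> ('v \<Rightarrow> 'y) \<Rightarrow> real)
    \<Rightarrow> (('v \<Rightarrow> 'y) \<times> ('v \<rightharpoonup> 'y) \<times> (('v \<rightharpoonup> 'y) \<times> 'v) list) pmf \<Rightarrow> real" where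
  "f_avg_of f D = measure_pmf.expectation D (\<lambda>(\<phi>, \<psi>, tr). f (dom \<psi>) \<phi>)"

definition c_avg_of :: "(('v \<Rightarrow> 'y) \<times> ('v \<rightharpoonup> 'y) \<times> (('v \<rightharpoonup> 'y) \<times> 'v) list) pmf \<Rightarrow> real" where
  "c_avg_of D = measure_pmf.expectation D (\<lambda>(\<phi>, \<psi>, tr). real (card (dom \<psi>)))"

definition c_avg :: "('v::finite, 'y) policy \<Rightarrow> ('v \<Rightarrow> 'y) pmf \<Rightarrow> real" where
  "c_avg \<pi> p = c_avg_of (exec \<pi> (\<lambda>_. False) p)"

definition Delta_l :: "(('v \<Rightarrow> 'y) \<times> ('v \<rightharpoonup> 'y) \<times> (('v \<rightharpoonup> 'y) \<times> 'v) list) pmf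
    \<Rightarrow> ('v \<Rightarrow> 'y) pmf \<Rightarrow> ('v set \<Rightarrow> ('v \<Rightarrow> 'y) \<Rightarrow> real) \<Rightarrow> real" where
  "Delta_l D p f = Sup {u. AE \<omega> in measure_pmf D.
      \<forall>(\<psi>, v) \<in> set (snd (snd \<omega>)). u \<le> gain p f v \<psi>}"

end

theory Submission
  imports Defs
begin

definition ind :: "('v \<Rightarrow> 'y) \<Rightarrow> ('v \<rightharpoonup> 'y) \<Rightarrow> real" where
  "ind \<phi> \<psi> = (if consistent \<phi> \<psi> then 1 else 0)"

definition hh :: "('v set \<Rightarrow> ('v \<Rightarrow> 'y) \<Rightarrow> real) \<Rightarrow> real \<Rightarrow> ('v \<rightharpoonup> 'y) \<Rightarrow> ('v \<Rightarrow> 'y) \<Rightarrow> real" where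
  "hh f m \<psi> \<phi> = f (dom \<psi>) \<phi> - m * real (card (dom \<psi>))"

definition W :: "('v::finite, 'y::finite) policy \<Rightarrow> (('v \<rightharpoonup> 'y) \<Rightarrow> bool) \<Rightarrow> ('v \<Rightarrow> 'y) pmf
   \<Rightarrow> ('v set \<Rightarrow> ('v \<Rightarrow> 'y) \<Rightarrow> real) \<Rightarrow> real \<Rightarrow> nat \<Rightarrow> ('v \<rightharpoonup> 'y) \<Rightarrow> real" where
  "W \<pi> S p f m n \<psi>s = (\<Sum>\<phi>\<in>UNIV. pmf p \<phi> * ind \<phi> \<psi>s *
      measure_pmf.expectation (run \<pi> S \<phi> n \<psi>s) (\<lambda>r. hh f m (fst r) \<phi>))"

definition BB :: "('v::finite \<Rightarrow> 'y::finite) pmf \<Rightarrow> ('v set \<Rightarrow> ('v \<Rightarrow> 'y) \<Rightarrow> real) \<Rightarrow> real \<Rightarrow> ('v \<rightharpoonup> 'y) \<Rightarrow> real" where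
  "BB p f m \<psi>s = (\<Sum>\<phi>\<in>UNIV. pmf p \<phi> * ind \<phi> \<psi>s * hh f m \<psi>s \<phi>)"

definition good :: "('v::finite, 'y::finite) policy \<Rightarrow> (('v \<rightharpoonup> 'y) \<Rightarrow> bool) \<Rightarrow> ('v \<Rightarrow> 'y) pmf
   \<Rightarrow> ('v set \<Rightarrow> ('v \<Rightarrow> 'y) \<Rightarrow> real) \<Rightarrow> real \<Rightarrow> nat \<Rightarrow> ('v \<rightharpoonup> 'y) \<Rightarrow> bool" where
  "good \<pi> S p f m n \<psi>s = (\<forall>\<phi>\<in>set_pmf p. consistent \<phi> \<psi>s \<longrightarrow>
      (\<forall>r\<in>set_pmf (run \<pi> S \<phi> n \<psi>s). \<forall>(\<psi>, v)\<in>set (snd r). m \<le> gain p f v \<psi>))"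

lemma fin_run: "finite (set_pmf (run (\<pi> :: ('v::finite, 'y) policy) S \<phi> n \<psi>))"
proof (induction n arbitrary: \<psi>)
  case 0 then show ?case by simp
next
  case (Suc n)
  show ?case
    by (auto simp: set_bind_pmf Suc split: option.splits intro!: finite_UN_I)
qed

lemma E_run_Suc:
  fixes \<pi> :: "('v::finite, 'y) policy"
  assumes "\<not> S \<psi>"
  shows "measure_pmf.expectation (run \<pi> S \<phi> (Suc n) \<psi>) (\<lambda>r. g (fst r)) =
    (\<Sum>a\<in>UNIV. pmf (\<pi> \<psi>) a * (case a of None \<Rightarrow> g \<psi>
        | Some v \<Rightarrow> measure_pmf.expectation (run \<pi> S \<phi> n (\<psi>(v \<mapsto> \<phi> v))) (\<lambda>r. g (fst r))))"
proof -
  have "measure_pmf.expectation (run \<pi> S \<phi> (Suc n) \<psi>) (\<lambda>r. g (fst r)) =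
    (\<Sum>a\<in>UNIV. pmf (\<pi> \<psi>) a *\<^sub>R measure_pmf.expectation (case a of None \<Rightarrow> return_pmf (\<psi>, [])
            | Some v \<Rightarrow> map_pmf (\<lambda>(\<psi>', tr). (\<psi>', (\<psi>, v) # tr)) (run \<pi> S \<phi> n (\<psi>(v \<mapsto> \<phi> v)))) (\<lambda>r. g (fst r)))"
    unfolding run.simps if_not_P[OF assms]
    by (rule pmf_expectation_bind) (auto simp: fin_run split: option.splits)
  also have "\<dots> = (\<Sum>a\<in>UNIV. pmf (\<pi> \<psi>) a * (case a of None \<Rightarrow> g \<psi>
        | Some v \<Rightarrow> measure_pmf.expectation (run \<pi> S \<phi> n (\<psi>(v \<mapsto> \<phi> v))) (\<lambda>r. g (fst r))))"
    by (intro sum.cong refl) (auto split: option.splits simp: integral_map_pmf split_beta)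
  finally show ?thesis .
qed

lemma consistent_upd:
  "v \<notin> dom \<psi> \<Longrightarrow> consistent \<phi> (\<psi>(v \<mapsto> y)) \<longleftrightarrow> consistent \<phi> \<psi> \<and> \<phi> v = y"
  unfolding consistent_def by (auto simp: domIff)

lemma ind_upd:
  "v \<notin> dom \<psi> \<Longrightarrow> ind \<phi> (\<psi>(v \<mapsto> y)) = ind \<phi> \<psi> * (if \<phi> v = y then 1 else 0)"
  by (simp add: ind_def consistent_upd)

lemma split_y:
  fixes p :: "('v::finite \<Rightarrow> 'y::finite) pmf"
  assumes "v \<notin> dom \<psi>"
  shows "(\<Sum>y\<in>UNIV. \<Sum>\<phi>\<in>UNIV. pmf p \<phi> * ind \<phi> (\<psi>(v \<mapsto> y)) * G y \<phi>) =
         (\<Sum>\<phi>\<in>UNIV. pmf p \<phi> * ind \<phi> \<psi> * G (\<phi> v) \<phi>)"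
proof -
  have "(\<Sum>y\<in>UNIV. \<Sum>\<phi>\<in>UNIV. pmf p \<phi> * ind \<phi> (\<psi>(v \<mapsto> y)) * G y \<phi>) =
        (\<Sum>\<phi>\<in>UNIV. \<Sum>y\<in>UNIV. pmf p \<phi> * ind \<phi> (\<psi>(v \<mapsto> y)) * G y \<phi>)"
    by (rule sum.swap)
  also have "\<dots> = (\<Sum>\<phi>\<in>UNIV. \<Sum>y\<in>UNIV. if \<phi> v = y then pmf p \<phi> * ind \<phi> \<psi> * G y \<phi> else 0)"
    by (intro sum.cong refl) (simp add: ind_upd[OF assms])
  also have "\<dots> = (\<Sum>\<phi>\<in>UNIV. pmf p \<phi> * ind \<phi> \<psi> * G (\<phi> v) \<phi>)"
    by (intro sum.cong refl) (simp add: sum.delta)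
  finally show ?thesis .
qed

lemma W_0: "W \<pi> S p f m 0 \<psi>s = BB p f m \<psi>s"
  by (simp add: W_def BB_def)

lemma W_stop: "S \<psi>s \<Longrightarrow> W \<pi> S p f m (Suc n) \<psi>s = BB p f m \<psi>s"
  by (simp add: W_def BB_def)

lemma W_step:
  assumes "valid_policy \<pi>" "\<not> S \<psi>s"
  shows "W \<pi> S p f m (Suc n) \<psi>s = (\<Sum>a\<in>UNIV. pmf (\<pi> \<psi>s) a * (case a of None \<Rightarrow> BB p f m \<psi>s
          | Some v \<Rightarrow> (\<Sum>y\<in>UNIV. W \<pi> S p f m n (\<psi>s(v \<mapsto> y)))))" (is "_ = ?thesis_r")
proof -
  have "W \<pi> S p f m (Suc n) \<psi>s = (\<Sum>\<phi>\<in>UNIV. \<Sum>a\<in>UNIV. pmf p \<phi> * ind \<phi> \<psi>s * (pmf (\<pi> \<psi>s) a *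
      (case a of None \<Rightarrow> hh f m \<psi>s \<phi>
        | Some v \<Rightarrow> measure_pmf.expectation (run \<pi> S \<phi> n (\<psi>s(v \<mapsto> \<phi> v))) (\<lambda>r. hh f m (fst r) \<phi>))))"
  proof -
    have e: "\<And>\<phi>. measure_pmf.expectation (run \<pi> S \<phi> (Suc n) \<psi>s) (\<lambda>r. hh f m (fst r) \<phi>) =
      (\<Sum>a\<in>UNIV. pmf (\<pi> \<psi>s) a * (case a of None \<Rightarrow> hh f m \<psi>s \<phi>
        | Some v \<Rightarrow> measure_pmf.expectation (run \<pi> S \<phi> n (\<psi>s(v \<mapsto> \<phi> v))) (\<lambda>r. hh f m (fst r) \<phi>)))"
      by (rule E_run_Suc[of S \<psi>s, OF assms(2)])
    show ?thesis unfolding W_def e by (simp add: sum_distrib_left)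
  qed
  also have "\<dots> = (\<Sum>a\<in>UNIV. pmf (\<pi> \<psi>s) a * (\<Sum>\<phi>\<in>UNIV. pmf p \<phi> * ind \<phi> \<psi>s *
      (case a of None \<Rightarrow> hh f m \<psi>s \<phi>
        | Some v \<Rightarrow> measure_pmf.expectation (run \<pi> S \<phi> n (\<psi>s(v \<mapsto> \<phi> v))) (\<lambda>r. hh f m (fst r) \<phi>))))"
    by (subst sum.swap) (simp add: sum_distrib_left mult_ac)
  also have "\<dots> = ?thesis_r"
  proof (intro sum.cong refl)
    fix a
    show "pmf (\<pi> \<psi>s) a * (\<Sum>\<phi>\<in>UNIV. pmf p \<phi> * ind \<phi> \<psi>s *
      (case a of None \<Rightarrow> hh f m \<psi>s \<phi>
        | Some v \<Rightarrow> measure_pmf.expectation (run \<pi> S \<phi> n (\<psi>s(v \<mapsto> \<phi> v))) (\<lambda>r. hh f m (fst r) \<phi>)))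
      = pmf (\<pi> \<psi>s) a * (case a of None \<Rightarrow> BB p f m \<psi>s
          | Some v \<Rightarrow> (\<Sum>y\<in>UNIV. W \<pi> S p f m n (\<psi>s(v \<mapsto> y))))"
    proof (cases a)
      case None then show ?thesis by (simp add: BB_def)
    next
      case (Some v)
      show ?thesis
      proof (cases "pmf (\<pi> \<psi>s) a = 0")
        case False
        then have "v \<notin> dom \<psi>s" using assms(1) Some
          by (auto simp: valid_policy_def set_pmf_iff)
        then show ?thesis using Some
          by (simp add: W_def split_y[where G="\<lambda>y \<phi>. measure_pmf.expectation (run \<pi> S \<phi> n (\<psi>s(v \<mapsto> y))) (\<lambda>r. hh f m (fst r) \<phi>)"])
      qed simp
    qed
  qed
  finally show ?thesis .
qed

lemma gain_sum:
  fixes p :: "('v::finite \<Rightarrow> 'y::finite) pmf"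
  assumes "set_pmf p \<inter> {\<phi>. consistent \<phi> \<psi>} \<noteq> {}"
  shows "gain p f v \<psi> * (\<Sum>\<phi>\<in>UNIV. pmf p \<phi> * ind \<phi> \<psi>) =
    (\<Sum>\<phi>\<in>UNIV. pmf p \<phi> * ind \<phi> \<psi> * (f (insert v (dom \<psi>)) \<phi> - f (dom \<psi>) \<phi>))"
proof -
  define C where "C = {\<phi>. consistent \<phi> \<psi>}"
  define P where "P = measure_pmf.prob p C"
  have P: "P = (\<Sum>\<phi>\<in>UNIV. pmf p \<phi> * ind \<phi> \<psi>)"
    unfolding P_def by (subst measure_measure_pmf_finite) (auto simp: C_def ind_def if_distrib sum.If_cases[OF finite] Int_def)
  have "P \<noteq> 0" using assms unfolding P_def C_def
    by (subst measure_pmf_zero_iff) auto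
  have "gain p f v \<psi> = (\<Sum>\<phi>\<in>UNIV. (f (insert v (dom \<psi>)) \<phi> - f (dom \<psi>) \<phi>) * pmf (cond_pmf p C) \<phi>)"
    unfolding gain_def C_def by (rule integral_measure_pmf_real) auto
  also have "\<dots> = (\<Sum>\<phi>\<in>UNIV. (f (insert v (dom \<psi>)) \<phi> - f (dom \<psi>) \<phi>) * (pmf p \<phi> * ind \<phi> \<psi> / P))"
    using assms by (intro sum.cong refl) (auto simp: pmf_cond C_def P_def ind_def)
  also have "\<dots> = (\<Sum>\<phi>\<in>UNIV. pmf p \<phi> * ind \<phi> \<psi> * (f (insert v (dom \<psi>)) \<phi> - f (dom \<psi>) \<phi>)) / P"
    by (simp add: sum_divide_distrib mult_ac)
  finally have "gain p f v \<psi> * P = (\<Sum>\<phi>\<in>UNIV. pmf p \<phi> * ind \<phi> \<psi> * (f (insert v (dom \<psi>)) \<phi> - f (dom \<psi>) \<phi>))"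
    using \<open>P \<noteq> 0\<close> by simp
  then show ?thesis using P by simp
qed

lemma run_Suc_mem:
  assumes "\<not> S \<psi>s" "Some v \<in> set_pmf (\<pi> \<psi>s)" "r \<in> set_pmf (run \<pi> S \<phi> n (\<psi>s(v \<mapsto> \<phi> v)))"
  shows "(fst r, (\<psi>s, v) # snd r) \<in> set_pmf (run \<pi> S \<phi> (Suc n) \<psi>s)"
  using assms by (auto simp: set_bind_pmf split_beta intro!: bexI[of _ "Some v"] image_eqI[of _ _ r])

lemma good_step:
  assumes "good \<pi> S p f m (Suc n) \<psi>s" "\<not> S \<psi>s" "Some v \<in> set_pmf (\<pi> \<psi>s)" "v \<notin> dom \<psi>s"
  shows "good \<pi> S p f m n (\<psi>s(v \<mapsto> y))"
  unfolding good_def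
proof (rule ballI, rule impI, rule ballI)
  fix \<phi> r assume \<phi>: "\<phi> \<in> set_pmf p" "consistent \<phi> (\<psi>s(v \<mapsto> y))"
    and r: "r \<in> set_pmf (run \<pi> S \<phi> n (\<psi>s(v \<mapsto> y)))"
  have c: "consistent \<phi> \<psi>s" "\<phi> v = y" using \<phi>(2) consistent_upd[OF assms(4)] by auto
  have "(fst r, (\<psi>s, v) # snd r) \<in> set_pmf (run \<pi> S \<phi> (Suc n) \<psi>s)"
    using run_Suc_mem[where S=S and \<psi>s=\<psi>s and \<pi>=\<pi>, OF assms(2,3)] r c(2) by auto
  then show "\<forall>(\<psi>, v)\<in>set (snd r). m \<le> gain p f v \<psi>"
    using assms(1) \<phi>(1) c(1) unfolding good_def by fastforce
qed

lemma good_gain: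
  assumes "good \<pi> S p f m (Suc n) \<psi>s" "\<not> S \<psi>s" "Some v \<in> set_pmf (\<pi> \<psi>s)"
    "\<phi> \<in> set_pmf p" "consistent \<phi> \<psi>s"
  shows "m \<le> gain p f v \<psi>s"
proof -
  obtain r where r: "r \<in> set_pmf (run \<pi> S \<phi> n (\<psi>s(v \<mapsto> \<phi> v)))"
    by (metis all_not_in_conv set_pmf_not_empty)
  have "(fst r, (\<psi>s, v) # snd r) \<in> set_pmf (run \<pi> S \<phi> (Suc n) \<psi>s)"
    using run_Suc_mem[OF assms(2,3) r] .
  then show ?thesis using assms(1,4,5) unfolding good_def by fastforce
qed

lemma one_step:
  fixes p :: "('v::finite \<Rightarrow> 'y::finite) pmf"
  assumes "good \<pi> S p f m (Suc n) \<psi>s" "\<not> S \<psi>s" "Some v \<in> set_pmf (\<pi> \<psi>s)" "v \<notin> dom \<psi>s"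
  shows "BB p f m \<psi>s \<le> (\<Sum>\<phi>\<in>UNIV. pmf p \<phi> * ind \<phi> \<psi>s * hh f m (\<psi>s(v \<mapsto> \<phi> v)) \<phi>)"
proof -
  have card: "card (dom (\<psi>s(v \<mapsto> y))) = Suc (card (dom \<psi>s))" for y
    using assms(4) by (simp add: card_insert_if)
  have eq: "(\<Sum>\<phi>\<in>UNIV. pmf p \<phi> * ind \<phi> \<psi>s * hh f m (\<psi>s(v \<mapsto> \<phi> v)) \<phi>) - BB p f m \<psi>s =
     (\<Sum>\<phi>\<in>UNIV. pmf p \<phi> * ind \<phi> \<psi>s * (f (insert v (dom \<psi>s)) \<phi> - f (dom \<psi>s) \<phi>)) - m * (\<Sum>\<phi>\<in>UNIV. pmf p \<phi> * ind \<phi> \<psi>s)"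
    unfolding BB_def hh_def card
    by (simp add: sum_subtractf[symmetric] sum_distrib_left algebra_simps)
  show ?thesis
  proof (cases "set_pmf p \<inter> {\<phi>. consistent \<phi> \<psi>s} = {}")
    case True
    then have z: "pmf p \<phi> * ind \<phi> \<psi>s = 0" for \<phi>
      by (auto simp: ind_def set_pmf_iff)
    have "(\<Sum>\<phi>\<in>UNIV. pmf p \<phi> * ind \<phi> \<psi>s * (f (insert v (dom \<psi>s)) \<phi> - f (dom \<psi>s) \<phi>)) = 0"
      "(\<Sum>\<phi>\<in>UNIV. pmf p \<phi> * ind \<phi> \<psi>s) = 0"
      by (simp_all only: z mult_zero_left sum.neutral_const)
    then show ?thesis using eq by simp
  next
    case False
    then obtain \<phi> where "\<phi> \<in> set_pmf p" "consistent \<phi> \<psi>s" by blast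
    then have mg: "m \<le> gain p f v \<psi>s" using good_gain assms by blast
    have nn: "0 \<le> (\<Sum>\<phi>\<in>UNIV. pmf p \<phi> * ind \<phi> \<psi>s)"
      by (intro sum_nonneg) (auto simp: ind_def)
    have "m * (\<Sum>\<phi>\<in>UNIV. pmf p \<phi> * ind \<phi> \<psi>s) \<le> gain p f v \<psi>s * (\<Sum>\<phi>\<in>UNIV. pmf p \<phi> * ind \<phi> \<psi>s)"
      using mult_right_mono[OF mg nn] .
    then show ?thesis using eq gain_sum[OF False, of f v] by simp
  qed
qed

lemma lemT:
  fixes p :: "('v::finite \<Rightarrow> 'y::finite) pmf"
  assumes "valid_policy \<pi>" "good \<pi> S p f m n \<psi>s"
  shows "BB p f m \<psi>s \<le> W \<pi> S p f m n \<psi>s"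
  using assms(2)
proof (induction n arbitrary: \<psi>s)
  case 0 then show ?case by (simp add: W_0)
next
  case (Suc n)
  show ?case
  proof (cases "S \<psi>s")
    case True then show ?thesis by (simp add: W_stop)
  next
    case False
    have "BB p f m \<psi>s = (\<Sum>a\<in>UNIV. pmf (\<pi> \<psi>s) a * BB p f m \<psi>s)"
      by (simp add: sum_distrib_right[symmetric] sum_pmf_eq_1)
    also have "\<dots> \<le> W \<pi> S p f m (Suc n) \<psi>s"
      unfolding W_step[where S=S and \<psi>s=\<psi>s, OF assms(1) False]
    proof (intro sum_mono)
      fix a assume "a \<in> (UNIV :: 'v option set)"
      have *: "BB p f m \<psi>s \<le> (case a of None \<Rightarrow> BB p f m \<psi>s
          | Some v \<Rightarrow> (\<Sum>y\<in>UNIV. W \<pi> S p f m n (\<psi>s(v \<mapsto> y))))"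
        if "a \<in> set_pmf (\<pi> \<psi>s)"
      proof (cases a)
        case (Some v)
        have v: "v \<notin> dom \<psi>s" using assms(1) Some that by (auto simp: valid_policy_def)
        have "BB p f m \<psi>s \<le> (\<Sum>\<phi>\<in>UNIV. pmf p \<phi> * ind \<phi> \<psi>s * hh f m (\<psi>s(v \<mapsto> \<phi> v)) \<phi>)"
          using one_step[OF Suc.prems False _ v] Some that by simp
        also have "\<dots> = (\<Sum>y\<in>UNIV. BB p f m (\<psi>s(v \<mapsto> y)))"
          unfolding BB_def by (rule split_y[OF v, symmetric])
        also have "\<dots> \<le> (\<Sum>y\<in>UNIV. W \<pi> S p f m n (\<psi>s(v \<mapsto> y)))"
          using Suc.IH good_step[OF Suc.prems False _ v] Some that by (intro sum_mono) auto
        finally show ?thesis using Some by simp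
      qed simp
      show "pmf (\<pi> \<psi>s) a * BB p f m \<psi>s \<le> pmf (\<pi> \<psi>s) a * (case a of None \<Rightarrow> BB p f m \<psi>s
          | Some v \<Rightarrow> (\<Sum>y\<in>UNIV. W \<pi> S p f m n (\<psi>s(v \<mapsto> y))))"
      proof (cases "a \<in> set_pmf (\<pi> \<psi>s)")
        case True then show ?thesis using * by (intro mult_left_mono) auto
      next
        case False then show ?thesis by (simp add: set_pmf_iff)
      qed
    qed
    finally show ?thesis .
  qed
qed

lemma lemC:
  fixes p :: "('v::finite \<Rightarrow> 'y::finite) pmf"
  assumes "valid_policy \<pi>" "\<And>\<psi>. S \<psi> \<Longrightarrow> S' \<psi>" "good \<pi> S p f m n \<psi>s"
  shows "W \<pi> S' p f m n \<psi>s \<le> W \<pi> S p f m n \<psi>s"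
  using assms(3)
proof (induction n arbitrary: \<psi>s)
  case 0 then show ?case by (simp add: W_0)
next
  case (Suc n)
  show ?case
  proof (cases "S \<psi>s")
    case True then show ?thesis using assms(2) by (simp add: W_stop)
  next
    case False
    show ?thesis
    proof (cases "S' \<psi>s")
      case True
      then show ?thesis using lemT[OF assms(1) Suc.prems] by (simp add: W_stop)
    next
      case False': False
      show ?thesis
        unfolding W_step[where S=S and \<psi>s=\<psi>s, OF assms(1) False]
          W_step[where S=S' and \<psi>s=\<psi>s, OF assms(1) False']
      proof (intro sum_mono)
        fix a assume "a \<in> (UNIV :: 'v option set)"
        have *: "(case a of None \<Rightarrow> BB p f m \<psi>s
            | Some v \<Rightarrow> (\<Sum>y\<in>UNIV. W \<pi> S' p f m n (\<psi>s(v \<mapsto> y)))) \<le>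
            (case a of None \<Rightarrow> BB p f m \<psi>s
            | Some v \<Rightarrow> (\<Sum>y\<in>UNIV. W \<pi> S p f m n (\<psi>s(v \<mapsto> y))))"
          if "a \<in> set_pmf (\<pi> \<psi>s)"
        proof (cases a)
          case (Some v)
          have v: "v \<notin> dom \<psi>s" using assms(1) Some that by (auto simp: valid_policy_def)
          show ?thesis
            using Suc.IH good_step[OF Suc.prems False _ v] Some that by (auto intro!: sum_mono)
        qed simp
        show "pmf (\<pi> \<psi>s) a * (case a of None \<Rightarrow> BB p f m \<psi>s
            | Some v \<Rightarrow> (\<Sum>y\<in>UNIV. W \<pi> S' p f m n (\<psi>s(v \<mapsto> y)))) \<le>
            pmf (\<pi> \<psi>s) a * (case a of None \<Rightarrow> BB p f m \<psi>s
            | Some v \<Rightarrow> (\<Sum>y\<in>UNIV. W \<pi> S p f m n (\<psi>s(v \<mapsto> y))))"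
        proof (cases "a \<in> set_pmf (\<pi> \<psi>s)")
          case True then show ?thesis using * by (intro mult_left_mono) auto
        next
          case False then show ?thesis by (simp add: set_pmf_iff)
        qed
      qed
    qed
  qed
qed

definition Kf :: "('v set \<Rightarrow> ('v \<Rightarrow> 'y) \<Rightarrow> real) \<Rightarrow> real
    \<Rightarrow> (('v \<Rightarrow> 'y) \<times> ('v \<rightharpoonup> 'y) \<times> (('v \<rightharpoonup> 'y) \<times> 'v) list) pmf \<Rightarrow> real" where
  "Kf f m D = measure_pmf.expectation D (\<lambda>(\<phi>, \<psi>, tr). hh f m \<psi> \<phi>)"

lemma fin_exec: "finite (set_pmf (exec (\<pi> :: ('v::finite, 'y::finite) policy) S p))"
  unfolding exec_def by (auto simp: set_bind_pmf fin_run intro!: finite_UN_I)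

lemma fin_sub: "finite (set_pmf (sub_exec (\<pi> :: ('v::finite, 'y::finite) policy) p f \<tau> \<rho>))"
  unfolding sub_exec_def by (auto simp: set_bind_pmf fin_exec intro!: finite_UN_I)

lemma exec_K: "Kf f m (exec (\<pi> :: ('v::finite, 'y::finite) policy) S p) = W \<pi> S p f m CARD('v) Map.empty"
proof -
  have "Kf f m (exec \<pi> S p) = (\<Sum>\<phi>\<in>UNIV. pmf p \<phi> *\<^sub>R measure_pmf.expectation
      (map_pmf (\<lambda>r. (\<phi>, r)) (run \<pi> S \<phi> CARD('v) Map.empty)) (\<lambda>(\<phi>, \<psi>, tr). hh f m \<psi> \<phi>))"
    unfolding Kf_def exec_def by (rule pmf_expectation_bind) (auto simp: fin_run)
  also have "\<dots> = W \<pi> S p f m CARD('v) Map.empty"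
    unfolding W_def by (intro sum.cong refl) (simp add: integral_map_pmf ind_def consistent_def split_beta)
  finally show ?thesis .
qed

lemma FC: "finite (set_pmf D) \<Longrightarrow> f_avg_of f D - m * c_avg_of D = Kf f m D"
proof -
  assume fin: "finite (set_pmf D)"
  let ?A = "\<lambda>x. f (dom (fst (snd x))) (fst x)"
  let ?B = "\<lambda>x. m * real (card (dom (fst (snd x))))"
  have e1: "(\<lambda>(\<phi>, \<psi>, tr). f (dom \<psi>) \<phi>) = ?A" by (auto simp: fun_eq_iff)
  have e2: "(\<lambda>(\<phi>, \<psi>, tr). hh f m \<psi> \<phi>) = (\<lambda>x. ?A x - ?B x)" by (auto simp: fun_eq_iff hh_def)
  have e3: "(\<lambda>(\<phi>, \<psi>, tr). real (card (dom \<psi>))) = (\<lambda>x. real (card (dom (fst (snd x)))))"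
    by (auto simp: fun_eq_iff)
  have "measure_pmf.expectation D (\<lambda>x. ?A x - ?B x) = measure_pmf.expectation D ?A - measure_pmf.expectation D ?B"
    by (rule Bochner_Integration.integral_diff) (rule integrable_measure_pmf_finite[OF fin])+
  moreover have "measure_pmf.expectation D ?B = m * measure_pmf.expectation D (\<lambda>x. real (card (dom (fst (snd x)))))"
    by (rule integral_mult_right_zero)
  ultimately show ?thesis unfolding f_avg_of_def c_avg_of_def Kf_def e1 e2 e3 by simp
qed

lemma C0: "c_avg_of D = Kf (\<lambda>_ _. 0) (-1) D"
  unfolding c_avg_of_def Kf_def hh_def by (simp add: split_beta)

lemma sub_E:
  assumes "0 \<le> \<rho>" "\<rho> \<le> 1"
  shows "measure_pmf.expectation (sub_exec (\<pi> :: ('v::finite, 'y::finite) policy) p f \<tau> \<rho>) g =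
    \<rho> * measure_pmf.expectation (exec \<pi> (\<lambda>\<psi>. \<forall>v. v \<notin> dom \<psi> \<longrightarrow> gain p f v \<psi> < \<tau>) p) g +
    (1 - \<rho>) * measure_pmf.expectation (exec \<pi> (\<lambda>\<psi>. \<forall>v. v \<notin> dom \<psi> \<longrightarrow> gain p f v \<psi> \<le> \<tau>) p) g"
proof -
  have "measure_pmf.expectation (sub_exec \<pi> p f \<tau> \<rho>) g = (\<Sum>b\<in>UNIV. pmf (bernoulli_pmf \<rho>) b *\<^sub>R
     measure_pmf.expectation (if b then exec \<pi> (\<lambda>\<psi>. \<forall>v. v \<notin> dom \<psi> \<longrightarrow> gain p f v \<psi> < \<tau>) p
      else exec \<pi> (\<lambda>\<psi>. \<forall>v. v \<notin> dom \<psi> \<longrightarrow> gain p f v \<psi> \<le> \<tau>) p) g)"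
    unfolding sub_exec_def by (rule pmf_expectation_bind) (auto simp: fin_exec)
  also have "\<dots> = pmf (bernoulli_pmf \<rho>) True * measure_pmf.expectation (exec \<pi> (\<lambda>\<psi>. \<forall>v. v \<notin> dom \<psi> \<longrightarrow> gain p f v \<psi> < \<tau>) p) g
     + pmf (bernoulli_pmf \<rho>) False * measure_pmf.expectation (exec \<pi> (\<lambda>\<psi>. \<forall>v. v \<notin> dom \<psi> \<longrightarrow> gain p f v \<psi> \<le> \<tau>) p) g"
    by (simp only: UNIV_bool sum.insert_remove finite.emptyI finite_insert sum.empty) simp
  finally show ?thesis using assms by simp
qed

lemma cmp_exec:
  fixes \<pi> :: "('v::finite, 'y::finite) policy"
  assumes "valid_policy \<pi>" "\<And>\<psi>. S \<psi> \<Longrightarrow> S' \<psi>"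
    "\<forall>\<omega>\<in>set_pmf (exec \<pi> S p). \<forall>(\<psi>, v)\<in>set (snd (snd \<omega>)). m \<le> gain p f v \<psi>"
  shows "Kf f m (exec \<pi> S' p) \<le> Kf f m (exec \<pi> S p)"
proof -
  have "good \<pi> S p f m CARD('v) Map.empty"
    unfolding good_def
  proof (rule ballI, rule impI, rule ballI)
    fix \<phi> r assume "\<phi> \<in> set_pmf p" "r \<in> set_pmf (run \<pi> S \<phi> CARD('v) Map.empty)"
    then have "(\<phi>, r) \<in> set_pmf (exec \<pi> S p)" unfolding exec_def by (auto simp: set_bind_pmf)
    then show "\<forall>(\<psi>, v)\<in>set (snd r). m \<le> gain p f v \<psi>" using assms(3) by (metis snd_conv)
  qed
  note X = lemC[OF assms(1) assms(2) this] show ?thesis unfolding exec_K by (rule X)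
qed

lemma cost_mono:
  fixes \<pi> :: "('v::finite, 'y::finite) policy"
  assumes "valid_policy \<pi>" "\<And>\<psi>. S \<psi> \<Longrightarrow> S' \<psi>"
  shows "c_avg_of (exec \<pi> S' p) \<le> c_avg_of (exec \<pi> S p)"
  unfolding C0 by (rule cmp_exec[OF assms]) (auto simp: gain_def)

lemma Delta_le:
  fixes D :: "(('v::finite \<Rightarrow> 'y::finite) \<times> ('v \<rightharpoonup> 'y) \<times> (('v \<rightharpoonup> 'y) \<times> 'v) list) pmf"
  assumes "\<omega> \<in> set_pmf D" "(\<psi>, v) \<in> set (snd (snd \<omega>))"
  shows "Delta_l D p f \<le> gain p f v \<psi>"
  unfolding Delta_l_def
proof (rule cSup_least)
  let ?M = "Min (range (\<lambda>x. gain p f (snd x) (fst x)))"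
  have Mle: "?M \<le> gain p f v' \<psi>'" for \<psi>' v'
  proof -
    have "?M \<le> (\<lambda>x. gain p f (snd x) (fst x)) (\<psi>', v')"
      by (rule Min_le) (simp, rule rangeI)
    then show ?thesis by simp
  qed
  have "?M \<in> {u. AE \<omega> in measure_pmf D. \<forall>(\<psi>, v)\<in>set (snd (snd \<omega>)). u \<le> gain p f v \<psi>}"
    unfolding AE_measure_pmf_iff mem_Collect_eq by (simp add: Mle split_beta)
  then show "{u. AE \<omega> in measure_pmf D. \<forall>(\<psi>, v)\<in>set (snd (snd \<omega>)). u \<le> gain p f v \<psi>} \<noteq> {}"
    by blast
  fix x assume "x \<in> {u. AE \<omega> in measure_pmf D. \<forall>(\<psi>, v)\<in>set (snd (snd \<omega>)). u \<le> gain p f v \<psi>}"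
  then have "\<forall>(\<psi>, v)\<in>set (snd (snd \<omega>)). x \<le> gain p f v \<psi>"
    unfolding AE_measure_pmf_iff mem_Collect_eq using assms(1) by blast
  then show "x \<le> gain p f v \<psi>" using assms(2) by blast
qed

lemma conv_le:
  fixes r a b M :: real
  assumes "0 \<le> r" "r \<le> 1" "a \<le> M" "b \<le> M"
  shows "r * a + (1 - r) * b \<le> M"
proof -
  have "r * a \<le> r * M" using assms by (intro mult_left_mono) auto
  moreover have "(1 - r) * b \<le> (1 - r) * M" using assms by (intro mult_left_mono) auto
  ultimately show ?thesis by (simp add: algebra_simps)
qed

lemma conv_ge:
  fixes r a b M :: real
  assumes "0 \<le> r" "r \<le> 1" "M \<le> a" "M \<le> b"
  shows "M \<le> r * a + (1 - r) * b"
proof -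
  have "r * M \<le> r * a" using assms by (intro mult_left_mono) auto
  moreover have "(1 - r) * M \<le> (1 - r) * b" using assms by (intro mult_left_mono) auto
  ultimately show ?thesis by (simp add: algebra_simps)
qed

lemma sub_support:
  assumes "0 \<le> \<rho>" "\<rho> \<le> 1"
  shows "0 < \<rho> \<Longrightarrow> set_pmf (exec \<pi> (\<lambda>\<psi>. \<forall>v. v \<notin> dom \<psi> \<longrightarrow> gain p f v \<psi> < \<tau>) p) \<subseteq> set_pmf (sub_exec \<pi> p f \<tau> \<rho>)"
    and "\<rho> < 1 \<Longrightarrow> set_pmf (exec \<pi> (\<lambda>\<psi>. \<forall>v. v \<notin> dom \<psi> \<longrightarrow> gain p f v \<psi> \<le> \<tau>) p) \<subseteq> set_pmf (sub_exec \<pi> p f \<tau> \<rho>)"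
proof -
  assume "0 < \<rho>"
  then have "True \<in> set_pmf (bernoulli_pmf \<rho>)" using assms by (simp add: set_pmf_iff)
  then show "set_pmf (exec \<pi> (\<lambda>\<psi>. \<forall>v. v \<notin> dom \<psi> \<longrightarrow> gain p f v \<psi> < \<tau>) p) \<subseteq> set_pmf (sub_exec \<pi> p f \<tau> \<rho>)"
    unfolding sub_exec_def set_bind_pmf by (intro subsetI UN_I[of True]) auto
next
  assume "\<rho> < 1"
  then have "False \<in> set_pmf (bernoulli_pmf \<rho>)" using assms by (simp add: set_pmf_iff)
  then show "set_pmf (exec \<pi> (\<lambda>\<psi>. \<forall>v. v \<notin> dom \<psi> \<longrightarrow> gain p f v \<psi> \<le> \<tau>) p) \<subseteq> set_pmf (sub_exec \<pi> p f \<tau> \<rho>)"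
    unfolding sub_exec_def set_bind_pmf by (intro subsetI UN_I[of False]) auto
qed

theorem lemma10:
  fixes \<pi> :: "('v::finite, 'y::finite) policy"
    and p :: "('v \<Rightarrow> 'y) pmf"
    and f :: "'v set \<Rightarrow> ('v \<Rightarrow> 'y) \<Rightarrow> real"
    and i :: nat
    and \<tau> \<rho> \<tau>' \<rho>' :: real
  assumes "valid_policy \<pi>"
    and "1 \<le> i" and "real i \<le> c_avg \<pi> p"
    and "\<tau> \<ge> 0" and "0 \<le> \<rho>" and "\<rho> \<le> 1"
    and "c_avg_of (sub_exec \<pi> p f \<tau> \<rho>) = real i"
    and "\<tau>' \<ge> 0" and "0 \<le> \<rho>'" and "\<rho>' \<le> 1"
    and "c_avg_of (sub_exec \<pi> p f \<tau>' \<rho>') = real (i - 1)"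
  shows "f_avg_of f (sub_exec \<pi> p f \<tau> \<rho>) - f_avg_of f (sub_exec \<pi> p f \<tau>' \<rho>')
           \<ge> Delta_l (sub_exec \<pi> p f \<tau> \<rho>) p f"
proof -
  define m where "m = Delta_l (sub_exec \<pi> p f \<tau> \<rho>) p f"
  define L where "L = (\<lambda>t \<psi>. \<forall>v. v \<notin> dom \<psi> \<longrightarrow> gain p f v \<psi> < t)"
  define E where "E = (\<lambda>t \<psi>. \<forall>v. v \<notin> dom \<psi> \<longrightarrow> gain p f v \<psi> \<le> t)"
  have LE: "\<And>t \<psi>. L t \<psi> \<Longrightarrow> E t \<psi>" unfolding L_def E_def by (auto simp: less_imp_le)
  have EL: "\<And>t t' \<psi>. t < t' \<Longrightarrow> E t \<psi> \<Longrightarrow> L t' \<psi>" unfolding L_def E_def by force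
  define D1 where "D1 = sub_exec \<pi> p f \<tau> \<rho>"
  define D2 where "D2 = sub_exec \<pi> p f \<tau>' \<rho>'"
  have KD1: "Kf g m' D1 = \<rho> * Kf g m' (exec \<pi> (L \<tau>) p) + (1 - \<rho>) * Kf g m' (exec \<pi> (E \<tau>) p)" for g m'
    unfolding Kf_def D1_def L_def E_def using sub_E assms(5,6) by blast
  have KD2: "Kf g m' D2 = \<rho>' * Kf g m' (exec \<pi> (L \<tau>') p) + (1 - \<rho>') * Kf g m' (exec \<pi> (E \<tau>') p)" for g m'
    unfolding Kf_def D2_def L_def E_def using sub_E assms(9,10) by blast
  have C1: "c_avg_of D1 = real i" using assms(7) D1_def by simp
  have C2: "c_avg_of D2 = real i - 1" using assms(11) assms(2) D2_def by simp
  have gA: "0 < \<rho> \<Longrightarrow> \<forall>\<omega>\<in>set_pmf (exec \<pi> (L \<tau>) p). \<forall>(\<psi>, v)\<in>set (snd (snd \<omega>)). m \<le> gain p f v \<psi>"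
    using sub_support(1)[OF assms(5,6), of \<pi> p f \<tau>] Delta_le unfolding m_def L_def by blast
  have gB: "\<rho> < 1 \<Longrightarrow> \<forall>\<omega>\<in>set_pmf (exec \<pi> (E \<tau>) p). \<forall>(\<psi>, v)\<in>set (snd (snd \<omega>)). m \<le> gain p f v \<psi>"
    using sub_support(2)[OF assms(5,6), of \<pi> p f \<tau>] Delta_le unfolding m_def E_def by blast
  have cAB: "c_avg_of (exec \<pi> (E t) p) \<le> c_avg_of (exec \<pi> (L t) p)" for t
    by (rule cost_mono[OF assms(1)]) (rule LE)
  have key: "Kf f m D2 \<le> Kf f m D1"
  proof (cases \<tau> \<tau>' rule: linorder_cases)
    case less
    have s1: "\<And>\<psi>. L \<tau> \<psi> \<Longrightarrow> L \<tau>' \<psi>" "\<And>\<psi>. L \<tau> \<psi> \<Longrightarrow> E \<tau>' \<psi>"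
      "\<And>\<psi>. E \<tau> \<psi> \<Longrightarrow> L \<tau>' \<psi>" "\<And>\<psi>. E \<tau> \<psi> \<Longrightarrow> E \<tau>' \<psi>"
      using LE EL less by blast+
    have hA: "Kf f m D2 \<le> Kf f m (exec \<pi> (L \<tau>) p)" if "0 < \<rho>"
      unfolding KD2 using assms(9,10) cmp_exec[OF assms(1) s1(1) gA[OF that]] cmp_exec[OF assms(1) s1(2) gA[OF that]]
      by (intro conv_le) auto
    have hB: "Kf f m D2 \<le> Kf f m (exec \<pi> (E \<tau>) p)" if "\<rho> < 1"
      unfolding KD2 using assms(9,10) cmp_exec[OF assms(1) s1(3) gB[OF that]] cmp_exec[OF assms(1) s1(4) gB[OF that]]
      by (intro conv_le) auto
    show ?thesis
    proof (cases "\<rho> = 0")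
      case True then show ?thesis unfolding KD1 using hB by simp
    next
      case False
      then have r0: "0 < \<rho>" using assms(5) by simp
      show ?thesis
      proof (cases "\<rho> = 1")
        case True then show ?thesis unfolding KD1 using hA r0 by simp
      next
        case False
        then have "\<rho> < 1" using assms(6) by simp
        then show ?thesis unfolding KD1 using hA hB r0 assms(5,6) by (intro conv_ge) auto
      qed
    qed
  next
    case equal
    have CC: "c_avg_of D1 - c_avg_of D2 = (\<rho> - \<rho>') * (c_avg_of (exec \<pi> (L \<tau>) p) - c_avg_of (exec \<pi> (E \<tau>) p))"
      unfolding C0 KD1 KD2 equal by (simp add: algebra_simps)
    have "\<rho>' < \<rho>"
    proof (rule ccontr)
      assume "\<not> \<rho>' < \<rho>"
      then have "(\<rho> - \<rho>') * (c_avg_of (exec \<pi> (L \<tau>) p) - c_avg_of (exec \<pi> (E \<tau>) p)) \<le> 0"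
        using cAB[of \<tau>] by (intro mult_nonpos_nonneg) auto
      then show False using CC C1 C2 by simp
    qed
    then have r0: "0 < \<rho>" using assms(9) by simp
    have "Kf f m (exec \<pi> (E \<tau>) p) \<le> Kf f m (exec \<pi> (L \<tau>) p)"
      using cmp_exec[OF assms(1) LE gA[OF r0]] by simp
    then have "0 \<le> (\<rho> - \<rho>') * (Kf f m (exec \<pi> (L \<tau>) p) - Kf f m (exec \<pi> (E \<tau>) p))"
      using \<open>\<rho>' < \<rho>\<close> by (intro mult_nonneg_nonneg) auto
    moreover have "Kf f m D1 - Kf f m D2 = (\<rho> - \<rho>') * (Kf f m (exec \<pi> (L \<tau>) p) - Kf f m (exec \<pi> (E \<tau>) p))"
      unfolding KD1 KD2 equal by (simp add: algebra_simps)
    ultimately show ?thesis by simp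
  next
    case greater
    have s: "\<And>\<psi>. E \<tau>' \<psi> \<Longrightarrow> L \<tau> \<psi>" using EL greater by blast
    have c1: "c_avg_of (exec \<pi> (L \<tau>) p) \<le> c_avg_of (exec \<pi> (E \<tau>') p)"
      by (rule cost_mono[OF assms(1) s])
    have c2: "c_avg_of (exec \<pi> (E \<tau>') p) \<le> c_avg_of (exec \<pi> (L \<tau>') p)" by (rule cAB)
    have c3: "c_avg_of (exec \<pi> (E \<tau>) p) \<le> c_avg_of (exec \<pi> (L \<tau>) p)" by (rule cAB)
    have "c_avg_of D1 \<le> c_avg_of (exec \<pi> (L \<tau>) p)"
      unfolding C0 KD1 using c3 assms(5,6) unfolding C0 by (intro conv_le) auto
    moreover have "c_avg_of (exec \<pi> (E \<tau>') p) \<le> c_avg_of D2"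
      unfolding C0 KD2 using c2 assms(9,10) unfolding C0 by (intro conv_ge) auto
    ultimately have False using c1 C1 C2 by simp
    then show ?thesis ..
  qed
  have F1: "f_avg_of f D1 = Kf f m D1 + m * c_avg_of D1"
  proof -
    have "f_avg_of f D1 - m * c_avg_of D1 = Kf f m D1" unfolding D1_def by (rule FC[OF fin_sub])
    then show ?thesis by simp
  qed
  have F2: "f_avg_of f D2 = Kf f m D2 + m * c_avg_of D2"
  proof -
    have "f_avg_of f D2 - m * c_avg_of D2 = Kf f m D2" unfolding D2_def by (rule FC[OF fin_sub])
    then show ?thesis by simp
  qed
  have "m \<le> f_avg_of f D1 - f_avg_of f D2"
    unfolding F1 F2 C1 C2 using key by (simp add: algebra_simps)
  then show ?thesis unfolding m_def D1_def D2_def .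
qed

end
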